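(* Let $L\in\mathbb{R}^{n\times n}$ be the Laplacian matrix of an undirected weighted graph, with eigenvalues $\lambda_1(L)\le\cdots\le\lambda_n(L)$ and orthonormal eigenvectors $v_1(L),\dots,v_n(L)$, and let $V_k=[v_1(L)\ \cdots\ v_k(L)]$, $\Lambda_k=\mathrm{diag}\{\lambda_i(L)\}_{i=1}^k$. Suppose $L$ is $k$-block-ideal with respect to a $k$-way partition $\{\mathcal{I}_1,\dots,\mathcal{I}_k\}$ of $[n]$, with invertible matrix $S\in\mathbb{R}^{k\times k}$ satisfying $V_k=P_{\{\mathcal{I}_i\}_{i=1}^k}S$, where $$P_{\{\mathcal{I}_i\}_{i=1}^k}:=[\mathbf{1}_{\mathcal{I}_1}\ \mathbf{1}_{\mathcal{I}_2}\ \cdots\ \mathbf{1}_{\mathcal{I}_k}].$$ Let $g_1(s),\dots,g_n(s)$, $f(s)$ be scalar transfer functions, $G(s)=\mathrm{diag}\{g_i(s)\}_{i=1}^n$ and $T_k(s)=V_k(V_k^TG^{-1}(s)V_k+f(s)\Lambda_k)^{-1}V_k^T$. Then $$T_k(s)=P_{\{\mathcal{I}_i\}_{i=1}^k}\big(I_k+\hat{G}(s)L_kf(s)\big)^{-1}\hat{G}(s)P^T_{\{\mathcal{I}_i\}_{i=1}^k},$$ where $\hat{G}(s)=\mathrm{diag}\{\hat{g}_i(s)\}_{i=1}^k$, $\hat{g}_i(s)=\big(\sum_{j\in\mathcal{I}_i}g_j^{-1}(s)\big)^{-1}$, and $L_k=(S^{-1})^T\Lambda_kS^{-1}$.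
   Context: For $\mathcal{I}\subseteq[n]=\{1,\dots,n\}$, $\mathbf{1}_{\mathcal{I}}\in\mathbb{R}^n$ is the indicator vector with $[\mathbf{1}_\mathcal{I}]_i=1$ if $i\in\mathcal{I}$ and $0$ otherwise. A Laplacian $L$ is called $k$-block-ideal with respect to a $k$-way partition $\{\mathcal{I}_1,\dots,\mathcal{I}_k\}$ of $[n]$ if there exists an invertible $S\in\mathbb{R}^{k\times k}$ with $[v_1(L)\ \cdots\ v_k(L)]=[\mathbf{1}_{\mathcal{I}_1}\ \cdots\ \mathbf{1}_{\mathcal{I}_k}]S$. *)

theory Defs
  imports "Jordan_Normal_Form.Gauss_Jordan_Elimination"
begin

definition minv :: "'a :: field mat \<Rightarrow> 'a mat" where
  "minv A = the (mat_inverse A)"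

definition weighted_graph_laplacian :: "nat \<Rightarrow> real mat \<Rightarrow> bool" where
  "weighted_graph_laplacian n L \<longleftrightarrow>
     (\<exists>W :: nat \<Rightarrow> nat \<Rightarrow> real.
        (\<forall>i<n. \<forall>j<n. W i j = W j i \<and> W i j \<ge> 0) \<and> (\<forall>i<n. W i i = 0) \<and>
        L = Matrix.mat n n (\<lambda>(i,j). if i = j then (\<Sum>l<n. W i l) else - W i j))"

definition is_partition :: "nat \<Rightarrow> nat \<Rightarrow> (nat \<Rightarrow> nat set) \<Rightarrow> bool" where
  "is_partition n k I \<longleftrightarrow>
     (\<forall>i<k. I i \<noteq> {}) \<and> (\<forall>i<k. \<forall>j<k. i \<noteq> j \<longrightarrow> I i \<inter> I j = {}) \<and>
     (\<Union>i<k. I i) = {0..<n}"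

definition indicator_mat :: "nat \<Rightarrow> nat \<Rightarrow> (nat \<Rightarrow> nat set) \<Rightarrow> 'a :: zero_neq_one mat" where
  "indicator_mat n k I = Matrix.mat n k (\<lambda>(r,c). if r \<in> I c then 1 else 0)"

text \<open>V_k = [v_1 ... v_k] (0-based: columns v 0, ..., v (k-1)).\<close>
definition first_cols :: "nat \<Rightarrow> nat \<Rightarrow> (nat \<Rightarrow> 'a vec) \<Rightarrow> 'a mat" where
  "first_cols n k v = Matrix.mat n k (\<lambda>(r,c). v c $ r)"

end

theory Submission imports Defs "Jordan_Normal_Form.Determinant" begin

lemma minv_props:
  fixes A :: "'a::field mat"
  assumes A: "A \<in> carrier_mat n n" and d: "det A \<noteq> 0"
  shows "minv A \<in> carrier_mat n n \<and> A * minv A = 1\<^sub>m n \<and> minv A * A = 1\<^sub>m n"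
proof (cases "mat_inverse A")
  case None
  have "A \<notin> Units (ring_mat TYPE('a) n ())" by (rule mat_inverse(1)[OF A None])
  moreover have "A \<in> Units (ring_mat TYPE('a) n ())" by (rule det_non_zero_imp_unit[OF A d])
  ultimately show ?thesis by contradiction
next
  case (Some B)
  then have "minv A = B" unfolding minv_def by simp
  with mat_inverse(2)[OF A Some] show ?thesis by auto
qed

lemma invertible_det:
  fixes A :: "'a::field mat"
  assumes A: "A \<in> carrier_mat n n" and inv: "invertible_mat A"
  shows "det A \<noteq> 0"
proof -
  from inv obtain B where AB: "A * B = 1\<^sub>m (dim_row A)" and BA: "B * A = 1\<^sub>m (dim_row B)"
    unfolding invertible_mat_def inverts_mat_def by blast
  have "dim_col B = n" using arg_cong[OF AB, of dim_col] A by simp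
  moreover have "dim_row B = n" using arg_cong[OF BA, of dim_col] A by simp
  ultimately have B: "B \<in> carrier_mat n n" by auto
  have "dim_row A = n" using A by simp
  hence AB': "A * B = 1\<^sub>m n" using AB by simp
  have "det A * det B = 1" using det_mult[OF A B] unfolding AB' det_one by simp
  thus ?thesis by (metis mult_zero_left zero_neq_one)
qed

lemma minv_unique:
  fixes A :: "'a::field mat"
  assumes A: "A \<in> carrier_mat n n" and B: "B \<in> carrier_mat n n" and AB: "A * B = 1\<^sub>m n"
  shows "minv A = B"
proof -
  have "det A * det B = 1" using det_mult[OF A B] unfolding AB det_one by simp
  hence "det A \<noteq> 0" by (metis mult_zero_left zero_neq_one)
  from minv_props[OF A this] have C: "minv A \<in> carrier_mat n n" and CA: "minv A * A = 1\<^sub>m n" by auto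
  have "minv A = minv A * (A * B)" using AB C by simp
  also have "\<dots> = (minv A * A) * B" using assoc_mult_mat[OF C A B] by simp
  also have "\<dots> = B" using CA B by simp
  finally show ?thesis .
qed

lemma map_of_real_mult:
  assumes "A \<in> carrier_mat a b" "B \<in> carrier_mat b c"
  shows "map_mat (of_real::real\<Rightarrow>complex) (A*B) = map_mat of_real A * map_mat of_real B"
  using of_real_hom.mat_hom_mult assms by blast

lemma map_of_real_one: "map_mat (of_real::real\<Rightarrow>complex) (1\<^sub>m n) = 1\<^sub>m n"
  using of_real_hom.mat_hom_one by blast

lemma map_of_real_transpose: "map_mat (of_real::real\<Rightarrow>complex) (A\<^sup>T) = (map_mat of_real A)\<^sup>T"
  by (rule eq_matI) auto

theorem theorem3:
  fixes n k :: nat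
    and L :: "real mat"
    and lam :: "nat \<Rightarrow> real"
    and v :: "nat \<Rightarrow> real vec"
    and I :: "nat \<Rightarrow> nat set"
    and S :: "real mat"
    and g :: "nat \<Rightarrow> complex \<Rightarrow> complex"
    and f :: "complex \<Rightarrow> complex"
    and s :: complex
  assumes L_lap: "L \<in> carrier_mat n n" "weighted_graph_laplacian n L"
    and k_le: "1 \<le> k" "k \<le> n"
    and eig_vec: "\<And>i. i < n \<Longrightarrow> v i \<in> carrier_vec n \<and> L *\<^sub>v v i = lam i \<cdot>\<^sub>v v i"
    and orthonormal: "\<And>i j. i < n \<Longrightarrow> j < n \<Longrightarrow> v i \<bullet> v j = (if i = j then 1 else 0)"
    and sorted: "\<And>i j. i \<le> j \<Longrightarrow> j < n \<Longrightarrow> lam i \<le> lam j"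
    and part: "is_partition n k I"
    and S_inv: "S \<in> carrier_mat k k" "invertible_mat S"
    and block_ideal: "first_cols n k v = indicator_mat n k I * S"
    and g_nz: "\<And>j. j < n \<Longrightarrow> g j s \<noteq> 0"
    and ghat_def: "\<And>i. i < k \<Longrightarrow> (\<Sum>j\<in>I i. inverse (g j s)) \<noteq> 0"
    and T_def: "invertible_mat
        ((map_mat complex_of_real (first_cols n k v))\<^sup>T
           * minv (mat_diag n (\<lambda>j. g j s))
           * map_mat complex_of_real (first_cols n k v)
         + f s \<cdot>\<^sub>m map_mat complex_of_real (mat_diag k lam))"
  shows
    "map_mat complex_of_real (first_cols n k v)
       * minv ((map_mat complex_of_real (first_cols n k v))\<^sup>T
                 * minv (mat_diag n (\<lambda>j. g j s))
                 * map_mat complex_of_real (first_cols n k v)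
               + f s \<cdot>\<^sub>m map_mat complex_of_real (mat_diag k lam))
       * (map_mat complex_of_real (first_cols n k v))\<^sup>T
     = indicator_mat n k I
       * minv (1\<^sub>m k + mat_diag k (\<lambda>i. inverse (\<Sum>j\<in>I i. inverse (g j s)))
                 * (f s \<cdot>\<^sub>m map_mat complex_of_real ((minv S)\<^sup>T * mat_diag k lam * minv S)))
       * mat_diag k (\<lambda>i. inverse (\<Sum>j\<in>I i. inverse (g j s)))
       * (indicator_mat n k I)\<^sup>T"
  
proof -
  let ?c = "complex_of_real"
  define P :: "complex mat" where "P = indicator_mat n k I"
  define Sc where "Sc = map_mat ?c S"
  define Si where "Si = minv S"
  define Sci where "Sci = map_mat ?c Si"
  define Vc where "Vc = map_mat ?c (first_cols n k v)"
  define Gi where "Gi = minv (mat_diag n (\<lambda>j. g j s))"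
  define h where "h = (\<lambda>i. \<Sum>j\<in>I i. inverse (g j s))"
  define H where "H = mat_diag k h"
  define Gh where "Gh = mat_diag k (\<lambda>i. inverse (h i))"
  define Lam where "Lam = map_mat ?c (mat_diag k lam)"
  define Lkc where "Lkc = map_mat ?c ((minv S)\<^sup>T * mat_diag k lam * minv S)"
  define N where "N = 1\<^sub>m k + Gh * (f s \<cdot>\<^sub>m Lkc)"
  define M where "M = Vc\<^sup>T * Gi * Vc + f s \<cdot>\<^sub>m Lam"
  define Mi where "Mi = minv M"
  define Y where "Y = minv N"
  have P: "P \<in> carrier_mat n k" unfolding P_def indicator_mat_def by simp
  have S: "S \<in> carrier_mat k k" by (rule S_inv(1))
  have Sc: "Sc \<in> carrier_mat k k" unfolding Sc_def using S by simp
  have dS: "det S \<noteq> 0" by (rule invertible_det[OF S S_inv(2)])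
  from minv_props[OF S dS] have Si: "Si \<in> carrier_mat k k" and SSi: "S * Si = 1\<^sub>m k"
    and SiS: "Si * S = 1\<^sub>m k" unfolding Si_def by auto
  have Sci: "Sci \<in> carrier_mat k k" unfolding Sci_def using Si by simp
  have ScSci: "Sc * Sci = 1\<^sub>m k" unfolding Sc_def Sci_def
    using map_of_real_mult[OF S Si] SSi map_of_real_one by metis
  have Vc: "Vc = P * Sc"
  proof -
    have Pr: "(indicator_mat n k I :: real mat) \<in> carrier_mat n k" unfolding indicator_mat_def by simp
    have "Vc = map_mat ?c (indicator_mat n k I * S)" unfolding Vc_def block_ideal ..
    also have "\<dots> = map_mat ?c (indicator_mat n k I) * Sc"
      unfolding Sc_def by (rule map_of_real_mult[OF Pr S])
    also have "map_mat ?c (indicator_mat n k I) = P"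
      unfolding P_def indicator_mat_def by (rule eq_matI) auto
    finally show ?thesis .
  qed
  have VcC: "Vc \<in> carrier_mat n k" unfolding Vc using P Sc by simp
  have Gi_eq: "Gi = mat_diag n (\<lambda>j. inverse (g j s))"
    unfolding Gi_def
  proof (rule minv_unique[of _ n])
    show "mat_diag n (\<lambda>j. g j s) * mat_diag n (\<lambda>j. inverse (g j s)) = 1\<^sub>m n"
      unfolding mat_diag_diag by (rule eq_matI) (auto simp: mat_diag_def g_nz)
  qed auto
  have Gi: "Gi \<in> carrier_mat n n" unfolding Gi_eq by simp
  have H: "H \<in> carrier_mat k k" unfolding H_def by simp
  have Gh: "Gh \<in> carrier_mat k k" unfolding Gh_def by simp
  have Lam: "Lam \<in> carrier_mat k k" unfolding Lam_def by simp
  have Lkc: "Lkc \<in> carrier_mat k k" using Si unfolding Si_def Lkc_def carrier_mat_def by simp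
  have fLkc: "f s \<cdot>\<^sub>m Lkc \<in> carrier_mat k k" using Lkc by simp
  have N: "N \<in> carrier_mat k k" unfolding N_def using Gh fLkc by simp
  have HGh: "H * Gh = 1\<^sub>m k"
    unfolding H_def Gh_def mat_diag_diag h_def by (rule eq_matI) (auto simp: mat_diag_def ghat_def)
  have PGP: "P\<^sup>T * Gi * P = H"
  proof -
    have PT: "P\<^sup>T \<in> carrier_mat k n" using P by simp
    have sub: "I i \<subseteq> {0..<n}" if "i < k" for i
      using part that unfolding is_partition_def by blast
    have disj: "I i \<inter> I j = {}" if "i < k" "j < k" "i \<noteq> j" for i j
      using part that unfolding is_partition_def by blast
    have "P\<^sup>T * Gi * P = Matrix.mat k k (\<lambda>(i,j). \<Sum>r\<in>{0..<n}. (if r \<in> I i then 1 else 0) * inverse (g r s) * (if r \<in> I j then 1 else 0))"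
      unfolding Gi_eq mat_diag_mult_right[OF PT]
      by (rule eq_matI) (auto simp: scalar_prod_def P_def indicator_mat_def)
    also have "\<dots> = H" unfolding H_def
    proof (rule eq_matI)
      fix i j assume i: "i < dim_row (mat_diag k h)" and j: "j < dim_col (mat_diag k h)"
      hence ik: "i < k" and jk: "j < k" by (auto simp: mat_diag_def)
      have "(\<Sum>r\<in>{0..<n}. (if r \<in> I i then 1 else 0) * inverse (g r s) * (if r \<in> I j then 1 else 0))
          = (\<Sum>r\<in>{0..<n}. if r \<in> I i \<inter> I j then inverse (g r s) else 0)"
        by (rule sum.cong) auto
      also have "\<dots> = (\<Sum>r\<in>{0..<n} \<inter> (I i \<inter> I j). inverse (g r s))"
        by (rule sum.inter_restrict[symmetric]) simp
      also have "\<dots> = (if i = j then h i else 0)"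
      proof (cases "i = j")
        case True
        hence "{0..<n} \<inter> (I i \<inter> I j) = I i" using sub[OF ik] by auto
        thus ?thesis using True unfolding h_def by simp
      next
        case False
        thus ?thesis using disj[OF ik jk False] by simp
      qed
      finally show "Matrix.mat k k (\<lambda>(i,j). \<Sum>r\<in>{0..<n}. (if r \<in> I i then 1 else 0) * inverse (g r s) * (if r \<in> I j then 1 else 0)) $$ (i, j) = mat_diag k h $$ (i, j)"
        using ik jk by (simp add: mat_diag_def)
    qed (auto simp: mat_diag_def)
    finally show ?thesis .
  qed
  have SLS: "Sc\<^sup>T * Lkc * Sc = Lam"
  proof -
    define D :: "real mat" where "D = mat_diag k lam"
    have D: "D \<in> carrier_mat k k" unfolding D_def by simp
    have ST: "S\<^sup>T \<in> carrier_mat k k" using S by simp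
    have SiT: "Si\<^sup>T \<in> carrier_mat k k" using Si by simp
    have SiTD: "Si\<^sup>T * D \<in> carrier_mat k k" using SiT D by simp
    have X: "Si\<^sup>T * D * Si \<in> carrier_mat k k" using SiTD Si by simp
    have "S\<^sup>T * (Si\<^sup>T * D * Si) * S = S\<^sup>T * (Si\<^sup>T * D * Si * S)" by (rule assoc_mult_mat[OF ST X S])
    also have "Si\<^sup>T * D * Si * S = Si\<^sup>T * D * (Si * S)" by (rule assoc_mult_mat[OF SiTD Si S])
    also have "\<dots> = Si\<^sup>T * D" unfolding SiS by (rule right_mult_one_mat[OF SiTD])
    also have "S\<^sup>T * (Si\<^sup>T * D) = (S\<^sup>T * Si\<^sup>T) * D" by (rule assoc_mult_mat[OF ST SiT D, symmetric])
    also have "S\<^sup>T * Si\<^sup>T = (Si * S)\<^sup>T" by (rule transpose_mult[OF Si S, symmetric])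
    finally have R: "S\<^sup>T * (Si\<^sup>T * D * Si) * S = D" unfolding SiS transpose_one left_mult_one_mat[OF D] .
    have "map_mat ?c (S\<^sup>T * (Si\<^sup>T * D * Si) * S) = map_mat ?c (S\<^sup>T * (Si\<^sup>T * D * Si)) * Sc"
      unfolding Sc_def by (rule map_of_real_mult[OF _ S, of _ k]) (use ST X in simp)
    also have "map_mat ?c (S\<^sup>T * (Si\<^sup>T * D * Si)) = map_mat ?c (S\<^sup>T) * map_mat ?c (Si\<^sup>T * D * Si)"
      by (rule map_of_real_mult[OF ST X])
    finally have "map_mat ?c D = map_mat ?c (S\<^sup>T) * map_mat ?c (Si\<^sup>T * D * Si) * Sc" unfolding R .
    thus ?thesis unfolding map_of_real_transpose Lkc_def Lam_def Sc_def Si_def D_def by simp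
  qed
  have HN: "H * N = H + f s \<cdot>\<^sub>m Lkc"
  proof -
    have "H * N = H * 1\<^sub>m k + H * (Gh * (f s \<cdot>\<^sub>m Lkc))"
      unfolding N_def by (rule mult_add_distrib_mat[OF H]) (use Gh fLkc in auto)
    also have "H * (Gh * (f s \<cdot>\<^sub>m Lkc)) = (H * Gh) * (f s \<cdot>\<^sub>m Lkc)"
      using assoc_mult_mat[OF H Gh fLkc] by simp
    finally show ?thesis using left_mult_one_mat[OF fLkc] right_mult_one_mat[OF H] unfolding HGh by simp
  qed
  have HNc: "H * N \<in> carrier_mat k k" using H N by simp
  have M_eq: "M = Sc\<^sup>T * (H * N) * Sc"
  proof -
    have ScT: "Sc\<^sup>T \<in> carrier_mat k k" using Sc by simp
    have PT: "P\<^sup>T \<in> carrier_mat k n" using P by simp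
    have B: "P\<^sup>T * Gi \<in> carrier_mat k n" using PT Gi by simp
    have C: "P * Sc \<in> carrier_mat n k" using P Sc by simp
    have BP: "P\<^sup>T * Gi * P \<in> carrier_mat k k" using B P by simp
    have "Vc\<^sup>T * Gi * Vc = Sc\<^sup>T * (P\<^sup>T * Gi) * (P * Sc)"
      unfolding Vc transpose_mult[OF P Sc] using assoc_mult_mat[OF ScT PT Gi] by simp
    also have "\<dots> = Sc\<^sup>T * ((P\<^sup>T * Gi) * (P * Sc))" by (rule assoc_mult_mat[OF ScT B C])
    also have "(P\<^sup>T * Gi) * (P * Sc) = (P\<^sup>T * Gi * P) * Sc" by (rule assoc_mult_mat[OF B P Sc, symmetric])
    also have "Sc\<^sup>T * ((P\<^sup>T * Gi * P) * Sc) = Sc\<^sup>T * (P\<^sup>T * Gi * P) * Sc" by (rule assoc_mult_mat[OF ScT BP Sc, symmetric])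
    also have "\<dots> = Sc\<^sup>T * H * Sc" unfolding PGP ..
    finally have 1: "Vc\<^sup>T * Gi * Vc = Sc\<^sup>T * H * Sc" .
    have "Sc\<^sup>T * (H * N) * Sc = (Sc\<^sup>T * H + Sc\<^sup>T * (f s \<cdot>\<^sub>m Lkc)) * Sc"
      unfolding HN using mult_add_distrib_mat[OF ScT H fLkc] by simp
    also have "\<dots> = Sc\<^sup>T * H * Sc + Sc\<^sup>T * (f s \<cdot>\<^sub>m Lkc) * Sc"
      using add_mult_distrib_mat[of _ k k _ Sc k] ScT H fLkc Sc by simp
    also have "Sc\<^sup>T * (f s \<cdot>\<^sub>m Lkc) * Sc = f s \<cdot>\<^sub>m (Sc\<^sup>T * Lkc * Sc)"
      using mult_smult_distrib[OF ScT Lkc] mult_smult_assoc_mat[of _ k k Sc k] ScT Lkc Sc by simp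
    finally show ?thesis unfolding M_def 1 SLS by simp
  qed
  have ScT0: "Sc\<^sup>T \<in> carrier_mat k k" using Sc by simp
  have M: "M \<in> carrier_mat k k" unfolding M_eq by (rule mult_carrier_mat[OF mult_carrier_mat[OF ScT0 HNc] Sc])
  have dM: "det M \<noteq> 0"
    by (rule invertible_det[OF M]) (unfold M_def Vc_def Gi_def Lam_def, rule T_def)
  have dN: "det N \<noteq> 0"
  proof
    assume "det N = 0"
    have "det M = det (Sc\<^sup>T * (H * N)) * det Sc"
      unfolding M_eq by (rule det_mult) (use Sc HNc in auto)
    also have "det (Sc\<^sup>T * (H * N)) = det (Sc\<^sup>T) * det (H * N)"
      by (rule det_mult) (use Sc HNc in auto)
    also have "det (H * N) = det H * det N" by (rule det_mult[OF H N])
    finally show False using dM \<open>det N = 0\<close> by simp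
  qed
  from minv_props[OF M dM] have Mi: "Mi \<in> carrier_mat k k" and MiM: "Mi * M = 1\<^sub>m k"
    unfolding Mi_def by auto
  from minv_props[OF N dN] have Y: "Y \<in> carrier_mat k k" and NY: "N * Y = 1\<^sub>m k"
    unfolding Y_def by auto
  define Z where "Z = Sc * Mi * Sc\<^sup>T"
  have Z: "Z \<in> carrier_mat k k" unfolding Z_def using Sc Mi by simp
  have ZHN: "Z * (H * N) = 1\<^sub>m k"
  proof -
    have ScT: "Sc\<^sup>T \<in> carrier_mat k k" using Sc by simp
    have K: "Sc\<^sup>T * (H * N) \<in> carrier_mat k k" using ScT HNc by simp
    have ScMi: "Sc * Mi \<in> carrier_mat k k" using Sc Mi by simp
    have "Sc\<^sup>T * (H * N) = Sc\<^sup>T * (H * N) * (Sc * Sci)" unfolding ScSci by (rule right_mult_one_mat[OF K, symmetric])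
    also have "\<dots> = M * Sci" unfolding M_eq by (rule assoc_mult_mat[OF K Sc Sci, symmetric])
    finally have KM: "Sc\<^sup>T * (H * N) = M * Sci" .
    have "Z * (H * N) = (Sc * Mi) * (Sc\<^sup>T * (H * N))" unfolding Z_def by (rule assoc_mult_mat[OF ScMi ScT HNc])
    also have "\<dots> = Sc * (Mi * (M * Sci))" unfolding KM using assoc_mult_mat[OF Sc Mi, of "M * Sci" k] M Sci by simp
    also have "Mi * (M * Sci) = (Mi * M) * Sci" by (rule assoc_mult_mat[OF Mi M Sci, symmetric])
    finally show ?thesis unfolding MiM left_mult_one_mat[OF Sci] ScSci .
  qed
  have HNYG: "(H * N) * (Y * Gh) = 1\<^sub>m k"
  proof -
    have "(H * N) * (Y * Gh) = ((H * N) * Y) * Gh" by (rule assoc_mult_mat[OF HNc Y Gh, symmetric])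
    also have "(H * N) * Y = H * (N * Y)" by (rule assoc_mult_mat[OF H N Y])
    finally show ?thesis unfolding NY right_mult_one_mat[OF H] HGh .
  qed
  have ZY: "Z = Y * Gh"
  proof -
    have "Z = Z * ((H * N) * (Y * Gh))" unfolding HNYG by (rule right_mult_one_mat[OF Z, symmetric])
    also have "\<dots> = (Z * (H * N)) * (Y * Gh)" using assoc_mult_mat[OF Z HNc, of "Y * Gh" k] Y Gh by simp
    finally show ?thesis unfolding ZHN using left_mult_one_mat[of "Y * Gh" k] Y Gh by simp
  qed
  have main: "Vc * Mi * Vc\<^sup>T = P * Y * Gh * P\<^sup>T"
  proof -
    have ScT: "Sc\<^sup>T \<in> carrier_mat k k" using Sc by simp
    have PT: "P\<^sup>T \<in> carrier_mat k n" using P by simp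
    have PSc: "P * Sc \<in> carrier_mat n k" using P Sc by simp
    have PScMi: "P * Sc * Mi \<in> carrier_mat n k" using PSc Mi by simp
    have ScMi: "Sc * Mi \<in> carrier_mat k k" using Sc Mi by simp
    have "Vc * Mi * Vc\<^sup>T = (P * Sc * Mi) * (Sc\<^sup>T * P\<^sup>T)" unfolding Vc transpose_mult[OF P Sc] ..
    also have "\<dots> = (P * Sc * Mi * Sc\<^sup>T) * P\<^sup>T" by (rule assoc_mult_mat[OF PScMi ScT PT, symmetric])
    also have "P * Sc * Mi = P * (Sc * Mi)" by (rule assoc_mult_mat[OF P Sc Mi])
    also have "P * (Sc * Mi) * Sc\<^sup>T = P * Z" unfolding Z_def by (rule assoc_mult_mat[OF P ScMi ScT])
    also have "P * Z = P * Y * Gh" unfolding ZY by (rule assoc_mult_mat[OF P Y Gh, symmetric])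
    finally show ?thesis .
  qed
  show ?thesis using main unfolding Vc_def Mi_def M_def Gi_def Lam_def P_def Y_def N_def Gh_def Lkc_def h_def .
qed

end
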